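(* Let $\mathcal{W}\subseteq\{x\in\mathbb{R}^d:\|x\|_2\le1\}$ be closed convex with $0\in\mathcal{W}$, let $f_t(x)=\langle \mathbf f_t,x\rangle$ for vectors $\mathbf f_1,\dots,\mathbf f_T\in\mathbb{R}^d$, set $\mathbf f_0=0$ and $\mathrm{EGV}^f_{T,2}=\sum_{t=0}^{T-1}\|\mathbf f_{t+1}-\mathbf f_t\|_2^2>0$. Run the online mirror prox updates with $L=1$ and $\eta=\sqrt{1/(2\mathrm{EGV}^f_{T,2})}$, i.e. $x_0=z_0=0$ and $$x_t=\arg\min_{x\in\mathcal{W}}\{\langle x,\mathbf f_{t-1}\rangle+\tfrac1{2\eta}\|x-z_{t-1}\|_2^2\},\quad z_t=\arg\min_{x\in\mathcal{W}}\{\langle x,\mathbf f_t\rangle+\tfrac1{2\eta}\|x-z_{t-1}\|_2^2\}.$$ Then $\sum_{t=1}^T\langle\mathbf f_t,x_t\rangle-\min_{x\in\mathcal{W}}\sum_{t=1}^T\langle\mathbf f_t,x\rangle\le\sqrt{2\,\mathrm{EGV}^f_{T,2}}$.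
   Context: $x_t$ is the decision played at round $t$, before $\mathbf f_t$ is revealed. *)

theory Defs
  imports "HOL-Analysis.Analysis"
begin

definition lossvec :: "(nat \<Rightarrow> 'a::euclidean_space) \<Rightarrow> nat \<Rightarrow> 'a" where
  "lossvec f t = (if t = 0 then 0 else f t)"

definition EGV2 :: "(nat \<Rightarrow> 'a::euclidean_space) \<Rightarrow> nat \<Rightarrow> real" where
  "EGV2 f T = (\<Sum>t<T. (norm (lossvec f (Suc t) - lossvec f t))^2)"

definition is_argmin_on :: "'a set \<Rightarrow> ('a \<Rightarrow> real) \<Rightarrow> 'a \<Rightarrow> bool" where
  "is_argmin_on W g y \<longleftrightarrow> y \<in> W \<and> (\<forall>x\<in>W. g y \<le> g x)"

end

theory Submission
  imports Defs
begin

lemma small_pos: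
  fixes L c :: real
  assumes "\<And>s. 0 < s \<Longrightarrow> s \<le> 1 \<Longrightarrow> 0 \<le> s * L + s^2 * c"
  shows "0 \<le> L"
proof (rule ccontr)
  assume "\<not> 0 \<le> L"
  hence L: "L < 0" by simp
  have h: "0 \<le> L + s * c" if "0 < s" "s \<le> 1" for s
  proof -
    have "0 \<le> s * (L + s * c)" using assms[OF that] by (simp add: algebra_simps power2_eq_square)
    thus ?thesis using that by (simp add: zero_le_mult_iff)
  qed
  show False
  proof (cases "c \<le> 0")
    case True
    with h[of 1] L show False by (simp add: mult_nonpos_nonneg) 
  next
    case False
    define s where "s = min 1 (-L/(2*c))"
    have s0: "0 < s" using False L by (simp add: s_def divide_neg_pos)
    have s1: "s \<le> 1" by (simp add: s_def)
    have "s * c \<le> (-L/(2*c)) * c" using False by (intro mult_right_mono) (auto simp: s_def)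
    also have "\<dots> = -L/2" using False by simp
    finally show False using h[OF s0 s1] L by linarith
  qed
qed

lemma argmin_foc:
  fixes W :: "'a::euclidean_space set"
  assumes "convex W" "is_argmin_on W (\<lambda>w. inner w g + c * (norm (w - z))^2) y" "w \<in> W"
  shows "0 \<le> inner (w - y) g + 2*c * inner (w - y) (y - z)"
proof -
  have yW: "y \<in> W" and mn: "\<And>v. v \<in> W \<Longrightarrow> inner y g + c * (norm (y - z))^2 \<le> inner v g + c * (norm (v - z))^2"
    using assms(2) unfolding is_argmin_on_def by auto
  define d where "d = w - y"
  show ?thesis unfolding d_def[symmetric]
  proof (rule small_pos[where c = "c * (norm d)^2"])
    fix s :: real assume s: "0 < s" "s \<le> 1"
    have "(1 - s) *\<^sub>R y + s *\<^sub>R w \<in> W" using assms(1) yW assms(3) s by (intro convexD) auto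
    moreover have "(1 - s) *\<^sub>R y + s *\<^sub>R w = y + s *\<^sub>R d" by (simp add: d_def algebra_simps)
    ultimately have "y + s *\<^sub>R d \<in> W" by simp
    from mn[OF this] have "inner y g + c * (norm (y - z))^2 \<le> inner (y + s *\<^sub>R d) g + c * (norm (y + s *\<^sub>R d - z))^2" .
    moreover have "(norm (y + s *\<^sub>R d - z))^2 = (norm (y - z))^2 + 2 * s * inner d (y - z) + s^2 * (norm d)^2"
      unfolding power2_norm_eq_inner by (simp add: algebra_simps inner_commute power2_eq_square)
    moreover have "inner (y + s *\<^sub>R d) g = inner y g + s * inner d g" by (simp add: inner_add_left)
    ultimately show "0 \<le> s * (inner d g + 2 * c * inner d (y - z)) + s^2 * (c * (norm d)^2)"
      by (simp add: algebra_simps)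
  qed
qed

lemma step:
  fixes u a b xx p q :: "'a::euclidean_space" and \<eta> :: real
  assumes eta: "\<eta> > 0"
    and h1: "0 \<le> inner (u - b) q + 2 * (1/(2*\<eta>)) * inner (u - b) (b - a)"
    and h2: "0 \<le> inner (b - xx) p + 2 * (1/(2*\<eta>)) * inner (b - xx) (xx - a)"
  shows "inner q (xx - u) \<le> (1/(2*\<eta>)) * ((norm (u-a))^2 - (norm (u-b))^2) + \<eta>/2 * (norm (q-p))^2"
proof -
  define k where "k = 1/\<eta>"
  have k: "k > 0" using eta by (simp add: k_def)
  have e1: "inner (u - b) (b - a) = ((norm (u-a))^2 - (norm (u-b))^2 - (norm (b-a))^2)/2"
    by (simp add: power2_norm_eq_inner algebra_simps inner_commute)
  have e2: "inner (b - xx) (xx - a) = ((norm (b-a))^2 - (norm (b-xx))^2 - (norm (xx-a))^2)/2"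
    by (simp add: power2_norm_eq_inner algebra_simps inner_commute)
  have e3: "inner q (xx - u) = inner (u - b) (-q) + inner (b - xx) (-p) + inner (q - p) (xx - b)"
    by (simp add: algebra_simps inner_commute)
  have cs: "inner (q - p) (xx - b) \<le> norm (q-p) * norm (xx - b)" by (rule norm_cauchy_schwarz)
  have am: "norm (q-p) * norm (xx - b) \<le> \<eta>/2 * (norm (q-p))^2 + k/2 * (norm (xx-b))^2"
  proof -
    have "0 \<le> (\<eta> * norm (q-p) - norm (xx-b))^2 / (2*\<eta>)" using eta by simp
    also have "\<dots> = \<eta>/2 * (norm (q-p))^2 + k/2 * (norm (xx-b))^2 - norm (q-p) * norm (xx - b)"
      using eta by (simp add: k_def field_simps power2_eq_square)
    finally show ?thesis by simp
  qed
  have nb: "norm (b - xx) = norm (xx - b)" by (simp add: norm_minus_commute)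
  have h1': "0 \<le> inner (u - b) q + k * (((norm (u-a))^2 - (norm (u-b))^2 - (norm (b-a))^2)/2)"
    using h1 e1 by (simp add: k_def)
  have h2': "0 \<le> inner (b - xx) p + k * (((norm (b-a))^2 - (norm (xx-b))^2 - (norm (xx-a))^2)/2)"
    using h2 e2 nb by (simp add: k_def)
  have xa: "0 \<le> k * (norm (xx-a))^2" using k by simp
  have "inner q (xx - u) \<le> k/2 * ((norm (u-a))^2 - (norm (u-b))^2) + \<eta>/2 * (norm (q-p))^2"
    using e3 cs am h1' h2' xa by (simp add: inner_minus_right algebra_simps inner_commute[of p] inner_commute[of q]) (simp add: field_simps)
  thus ?thesis by (simp add: k_def)
qed

theorem mainTheorem5:
  fixes W :: "'a::euclidean_space set"
    and f :: "nat \<Rightarrow> 'a" and x z :: "nat \<Rightarrow> 'a" and T :: nat and \<eta> :: real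
  assumes "closed W" and "convex W" and "0 \<in> W"
    and "W \<subseteq> cball 0 1"
    and "EGV2 f T > 0"
    and "\<eta> = sqrt (1 / (2 * EGV2 f T))"
    and "x 0 = 0" and "z 0 = 0"
    and "\<And>t. 1 \<le> t \<Longrightarrow> t \<le> T \<Longrightarrow>
           is_argmin_on W (\<lambda>w. inner w (lossvec f (t - 1)) + 1 / (2 * \<eta>) * (norm (w - z (t - 1)))^2) (x t)"
    and "\<And>t. 1 \<le> t \<Longrightarrow> t \<le> T \<Longrightarrow>
           is_argmin_on W (\<lambda>w. inner w (lossvec f t) + 1 / (2 * \<eta>) * (norm (w - z (t - 1)))^2) (z t)"
  shows "(\<Sum>t=1..T. inner (f t) (x t)) - (INF u\<in>W. \<Sum>t=1..T. inner (f t) u) \<le> sqrt (2 * EGV2 f T)"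
proof -
  define E where "E = EGV2 f T"
  have E0: "E > 0" using assms(5) by (simp add: E_def)
  define s where "s = sqrt (2*E)"
  have s0: "s > 0" using E0 by (simp add: s_def)
  have ss: "s^2 = 2*E" using E0 by (simp add: s_def)
  have eta: "\<eta> = 1/s" using assms(6) by (simp add: s_def E_def real_sqrt_divide)
  have eta0: "\<eta> > 0" using eta s0 by simp
  have zW: "z t \<in> W" if "1 \<le> t" "t \<le> T" for t using assms(10)[OF that] by (simp add: is_argmin_on_def)
  have xW: "x t \<in> W" if "1 \<le> t" "t \<le> T" for t using assms(9)[OF that] by (simp add: is_argmin_on_def)
  have bound: "(\<Sum>t=1..T. inner (f t) (x t)) - (\<Sum>t=1..T. inner (f t) u) \<le> s" if uW: "u \<in> W" for u
  proof -
    have ind: "n \<le> T \<longrightarrow> (\<Sum>t=1..n. inner (f t) (x t - u)) \<le>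
       (1/(2*\<eta>)) * ((norm (u - z 0))^2 - (norm (u - z n))^2)
       + \<eta>/2 * (\<Sum>t<n. (norm (lossvec f (Suc t) - lossvec f t))^2)" for n
    proof (induction n)
      case 0
      then show ?case by simp
    next
      case (Suc n)
      show ?case
      proof
        assume n: "Suc n \<le> T"
        have a1: "1 \<le> Suc n" by simp
        have f1: "0 \<le> inner (u - z (Suc n)) (lossvec f (Suc n)) + 2 * (1/(2*\<eta>)) * inner (u - z (Suc n)) (z (Suc n) - z n)"
          using argmin_foc[OF assms(2) assms(10)[OF a1 n] uW] by simp
        have f2: "0 \<le> inner (z (Suc n) - x (Suc n)) (lossvec f n) + 2 * (1/(2*\<eta>)) * inner (z (Suc n) - x (Suc n)) (x (Suc n) - z n)"
          using argmin_foc[OF assms(2) assms(9)[OF a1 n] zW[OF a1 n]] by simp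
        have st: "inner (lossvec f (Suc n)) (x (Suc n) - u) \<le> (1/(2*\<eta>)) * ((norm (u - z n))^2 - (norm (u - z (Suc n)))^2) + \<eta>/2 * (norm (lossvec f (Suc n) - lossvec f n))^2"
          by (rule step[OF eta0 f1 f2])
        have "lossvec f (Suc n) = f (Suc n)" by (simp add: lossvec_def)
        with st Suc.IH n show "(\<Sum>t=1..Suc n. inner (f t) (x t - u)) \<le>
         (1/(2*\<eta>)) * ((norm (u - z 0))^2 - (norm (u - z (Suc n)))^2)
         + \<eta>/2 * (\<Sum>t<Suc n. (norm (lossvec f (Suc t) - lossvec f t))^2)"
          by (simp add: algebra_simps)
      qed
    qed
    have "(\<Sum>t=1..T. inner (f t) (x t)) - (\<Sum>t=1..T. inner (f t) u) = (\<Sum>t=1..T. inner (f t) (x t - u))"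
      by (simp add: inner_diff_right sum_subtractf)
    also have "\<dots> \<le> (1/(2*\<eta>)) * ((norm (u - z 0))^2 - (norm (u - z T))^2) + \<eta>/2 * E"
      using ind[of T] by (simp add: E_def EGV2_def)
    also have "\<dots> \<le> (1/(2*\<eta>)) * 1 + \<eta>/2 * E"
    proof -
      have "norm u \<le> 1" using uW assms(4) by auto
      hence "(norm u)^2 \<le> 1" by (simp add: power_le_one)
      hence "(norm (u - z 0))^2 \<le> 1" using assms(8) by simp
      moreover have "0 \<le> (norm (u - z T))^2" by simp
      ultimately have "(norm (u - z 0))^2 - (norm (u - z T))^2 \<le> 1" by linarith
      thus ?thesis using eta0 by (intro add_right_mono mult_left_mono) auto
    qed
    also have "\<dots> = s / 2 + E / (2 * s)" using eta s0 by simp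
    also have "\<dots> = s/2 + s/4" using ss s0 by (simp add: field_simps power2_eq_square)
    finally show ?thesis using s0 by linarith
  qed
  have "(\<Sum>t=1..T. inner (f t) (x t)) - s \<le> (INF u\<in>W. \<Sum>t=1..T. inner (f t) u)"
    using assms(3) by (intro cINF_greatest) (auto dest: bound)
  thus ?thesis by (simp add: s_def E_def)
qed

end
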